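(* Let $l$ and $m$ be integers with $l \geqslant 2$ and $0 \leqslant m \leqslant 4l$. Then \[ f(l,m) := \sum_{j=0}^{\min\{l, \lfloor m/2\rfloor\}} \binom{l}{j}\binom{4l}{2m-4j} \geqslant \binom{4l}{m}. \]
   Context: Convention: $\binom{a}{b} = 0$ if $b > a$. *)

theory Defs
  imports Main
begin

end

theory Submission imports Defs "HOL-Computational_Algebra.Polynomial" begin

lemma coeffA:
  assumes "k > 0"
  shows "coeff (((1::nat poly) + monom 1 k)^n) i = (if k dvd i then n choose (i div k) else 0)"
proof -
  have e: "((1::nat poly) + monom 1 k)^n = (\<Sum>j\<le>n. monom (n choose j) (k*j))"
    by (subst add.commute, subst binomial_ring)
       (simp add: monom_power mult.commute of_nat_monom mult_monom)
  have "coeff (((1::nat poly) + monom 1 k)^n) i = (\<Sum>j\<le>n. if j = i div k \<and> k dvd i then n choose j else 0)"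
    unfolding e coeff_sum coeff_monom
    by (rule sum.cong) (use assms in auto)
  also have "\<dots> = (if k dvd i then n choose (i div k) else 0)"
    by (cases "k dvd i") (auto simp: sum.delta' binomial_eq_0)
  finally show ?thesis .
qed

lemma la2: "list_all2 (\<le>) ys xs \<Longrightarrow> nth_default (0::nat) ys n \<le> nth_default 0 xs n"
proof (induction arbitrary: n rule: list_all2_induct)
  case Nil then show ?case by simp
next
  case (Cons x xs y ys) then show ?case by (cases n) auto
qed

definition dom :: "nat poly \<Rightarrow> nat poly \<Rightarrow> bool" where
  "dom p q \<longleftrightarrow> (\<forall>n. coeff p n \<le> coeff q n)"

lemma dom_mult: "dom p q \<Longrightarrow> dom p' q' \<Longrightarrow> dom (p*p') (q*q')"
  unfolding dom_def coeff_mult by (auto intro!: sum_mono mult_mono)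

lemma dom_of_list: "list_all2 (\<le>) (coeffs p) (coeffs q) \<Longrightarrow> dom p q"
  unfolding dom_def using la2 by (metis nth_default_coeffs_eq)

definition P1 :: "nat poly" where "P1 = (1 + monom 1 4)*(1 + monom 1 1)^4"
definition Q1 :: "nat poly" where "Q1 = (1 + monom 1 2)^4"

lemma dom2: "dom (Q1^2) (P1^2)"
  by (rule dom_of_list) (unfold P1_def Q1_def, code_simp)
lemma dom3: "dom (Q1^3) (P1^3)"
  by (rule dom_of_list) (unfold P1_def Q1_def, code_simp)

lemma domL: "l \<ge> 2 \<Longrightarrow> dom (Q1^l) (P1^l)"
proof (induction l rule: less_induct)
  case (less l)
  show ?case
  proof (cases "l \<le> 3")
    case True
    then have "l = 2 \<or> l = 3" using less.prems by auto
    then show ?thesis using dom2 dom3 by auto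
  next
    case False
    then have "dom (Q1^(l-2)) (P1^(l-2))" using less by auto
    then have "dom (Q1^(l-2) * Q1^2) (P1^(l-2)*P1^2)" using dom2 dom_mult by blast
    moreover have "l - 2 + 2 = l" using False by auto
    ultimately show ?thesis by (metis power_add)
  qed
qed

theorem lemma3p16:
  fixes l m :: nat
  assumes "l \<ge> 2" and "m \<le> 4 * l"
  shows "(\<Sum>j = 0..min l (m div 2). (l choose j) * ((4 * l) choose (2 * m - 4 * j)))
           \<ge> (4 * l) choose m"
proof -
  have "coeff (Q1^l) (2*m) \<le> coeff (P1^l) (2*m)" using domL[OF assms(1)] unfolding dom_def by blast
  moreover have "coeff (Q1^l) (2*m) = (4*l) choose m"
    unfolding Q1_def using coeffA[of 2 "4*l" "2*m"] by (simp add: power_mult[symmetric])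
  moreover have "P1^l = (1 + monom 1 4)^l * (1 + monom 1 1)^(4*l)"
    unfolding P1_def by (simp add: power_mult_distrib power_mult[symmetric] mult.commute)
  moreover have "coeff ((1 + monom 1 4)^l * (1 + monom 1 1)^(4*l)) (2*m)
      = (\<Sum>j\<le>m div 2. (l choose j) * ((4 * l) choose (2 * m - 4 * j)))"
  proof -
    define g where "g i = (if 4 dvd i then l choose (i div 4) else 0) * ((4*l) choose (2*m - i))" for i
    have "coeff ((1 + monom 1 4)^l * (1 + monom 1 1)^(4*l)) (2*m) = (\<Sum>i\<le>2*m. g i)"
      unfolding coeff_mult g_def using coeffA[of 4 l] coeffA[of 1 "4*l"] by simp
    also have "\<dots> = (\<Sum>i\<in>(\<lambda>j. 4*j) ` {..m div 2}. g i)"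
      by (rule sum.mono_neutral_right) (auto simp: g_def)
    also have "\<dots> = (\<Sum>j\<le>m div 2. g (4*j))"
      by (subst sum.reindex) (auto simp: inj_on_def)
    also have "\<dots> = (\<Sum>j\<le>m div 2. (l choose j) * ((4 * l) choose (2 * m - 4 * j)))"
      by (simp add: g_def)
    finally show ?thesis .
  qed
  moreover have "(\<Sum>j\<le>m div 2. (l choose j) * ((4 * l) choose (2 * m - 4 * j)))
     = (\<Sum>j = 0..min l (m div 2). (l choose j) * ((4 * l) choose (2 * m - 4 * j)))"
    by (rule sum.mono_neutral_right) auto
  ultimately show ?thesis by simp
qed
end
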